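(* Let $(M,d)$ be a bounded metric space with $(p,q)$-URNS for some $p>0$ and $0<q<1$, such that $\mathcal A(M)$ is compact. Let $\mathcal F$ be a family of interlaced orbit-nonexpansive self-mappings of $M$. Then there exists $x\in M$ with $Tx=x$ for all $T\in\mathcal F$.
   Context: For a metric space $(M,d)$, a mapping $T:M\to M$ and $x\in M$, the orbit of $x$ is $o_T(x)=\{x\}\cup\{T^nx:n\in\mathbb N\}$. For $x\in M$ and bounded $A\subseteq M$, $D(x,A)=\sup\{d(x,a):a\in A\}$ and $\delta(A)=\sup\{d(x,y):x,y\in A\}$. A family $\mathcal F$ of self-mappings of a bounded metric space $M$ is a family of interlaced orbit-nonexpansive mappings if $d(Tx,Sy)\le\sup\{D(x,o_R(y)):R\in\mathcal F\}$ for all $T,S\in\mathcal F$ and $x,y\in M$. A subset of $M$ is admissible if it is an intersection of closed balls of $M$; $\mathcal A(M)$ denotes the family of admissible sets. $\mathcal A(M)$ is compact if every subfamily of $\mathcal A(M)$ all of whose finite intersections are nonempty has nonempty intersection. For $A\subseteq M$ and $r>0$, $B[A,r]=\bigcap_{x\in A}B(x,r)=\{y\in M: D(y,A)\le r\}$, where $B(x,r)$ is the closed ball. $(M,d)$ has $(p,q)$-URNS if $B[A,p\,\delta(A)]\cap B\big[B[A,p\,\delta(A)],\,q\,\delta(A)\big]\neq\emptyset$ for every $A\in\mathcal A(M)$ with $\delta(A)>0$. *)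

theory Defs
  imports "HOL-Analysis.Analysis"
begin

definition orbit :: "('a \<Rightarrow> 'a) \<Rightarrow> 'a \<Rightarrow> 'a set" where
  "orbit T x = insert x {(T ^^ n) x | n. n \<ge> 1}"

definition Dsup :: "('a \<Rightarrow> 'a \<Rightarrow> real) \<Rightarrow> 'a \<Rightarrow> 'a set \<Rightarrow> real" where
  "Dsup d x A = (SUP a\<in>A. d x a)"

definition diam_d :: "('a \<Rightarrow> 'a \<Rightarrow> real) \<Rightarrow> 'a set \<Rightarrow> real" where
  "diam_d d A = (SUP xy\<in>A \<times> A. d (fst xy) (snd xy))"

definition admissible :: "'a set \<Rightarrow> ('a \<Rightarrow> 'a \<Rightarrow> real) \<Rightarrow> 'a set \<Rightarrow> bool" where
  "admissible M d A \<longleftrightarrow>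
     (\<exists>\<B>. \<B> \<subseteq> {Metric_space.mcball M d x r | x r. x \<in> M} \<and> A = M \<inter> \<Inter>\<B>)"

definition admissible_compact :: "'a set \<Rightarrow> ('a \<Rightarrow> 'a \<Rightarrow> real) \<Rightarrow> bool" where
  "admissible_compact M d \<longleftrightarrow>
     (\<forall>\<C>. \<C> \<subseteq> Collect (admissible M d) \<longrightarrow>
        (\<forall>\<G>. finite \<G> \<and> \<G> \<subseteq> \<C> \<longrightarrow> M \<inter> \<Inter>\<G> \<noteq> {}) \<longrightarrow> M \<inter> \<Inter>\<C> \<noteq> {})"

definition Bset :: "'a set \<Rightarrow> ('a \<Rightarrow> 'a \<Rightarrow> real) \<Rightarrow> 'a set \<Rightarrow> real \<Rightarrow> 'a set" where
  "Bset M d A r = M \<inter> (\<Inter>x\<in>A. Metric_space.mcball M d x r)"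

definition URNS :: "'a set \<Rightarrow> ('a \<Rightarrow> 'a \<Rightarrow> real) \<Rightarrow> real \<Rightarrow> real \<Rightarrow> bool" where
  "URNS M d p q \<longleftrightarrow>
     (\<forall>A. admissible M d A \<and> diam_d d A > 0 \<longrightarrow>
        Bset M d A (p * diam_d d A) \<inter>
        Bset M d (Bset M d A (p * diam_d d A)) (q * diam_d d A) \<noteq> {})"

definition interlaced_orbit_nonexpansive ::
  "'a set \<Rightarrow> ('a \<Rightarrow> 'a \<Rightarrow> real) \<Rightarrow> ('a \<Rightarrow> 'a) set \<Rightarrow> bool" where
  "interlaced_orbit_nonexpansive M d F \<longleftrightarrow>
     (\<forall>T\<in>F. T ` M \<subseteq> M) \<and>
     (\<forall>T\<in>F. \<forall>S\<in>F. \<forall>x\<in>M. \<forall>y\<in>M.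
        d (T x) (S y) \<le> (SUP R\<in>F. Dsup d x (orbit R y)))"

end

theory Submission
  imports Defs
begin

lemma Zorn_min:
  assumes ne: "A \<noteq> {}"
    and ch: "\<And>C. C \<in> chains A \<Longrightarrow> C \<noteq> {} \<Longrightarrow> \<exists>L\<in>A. \<forall>X\<in>C. L \<subseteq> X"
  shows "\<exists>m\<in>A. \<forall>X\<in>A. X \<subseteq> m \<longrightarrow> X = m"
proof -
  have "\<exists>Mx\<in>uminus ` A. \<forall>X\<in>uminus ` A. Mx \<subseteq> X \<longrightarrow> X = Mx"
  proof (rule Zorn_Lemma2, intro ballI)
    fix C assume C: "C \<in> chains (uminus ` A)"
    show "\<exists>U\<in>uminus ` A. \<forall>X\<in>C. X \<subseteq> U"
    proof (cases "C = {}")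
      case True
      obtain a where "a \<in> A" using ne by blast
      then have "- a \<in> uminus ` A" by (rule imageI)
      then show ?thesis using True by blast
    next
      case False
      have sub: "uminus ` C \<subseteq> A"
      proof
        fix Y assume "Y \<in> uminus ` C"
        then obtain X where X: "Y = - X" "X \<in> C" by blast
        then have "X \<in> uminus ` A" using chainsD2[OF C] by blast
        then obtain a where "X = - a" "a \<in> A" by blast
        then show "Y \<in> A" using X(1) by simp
      qed
      have "chain\<^sub>\<subseteq> (uminus ` C)" unfolding chain_subset_def
      proof (intro ballI)
        fix X Y assume "X \<in> uminus ` C" "Y \<in> uminus ` C"
        then obtain X' Y' where XY: "X = - X'" "Y = - Y'" "X' \<in> C" "Y' \<in> C" by blast
        then have "X' \<subseteq> Y' \<or> Y' \<subseteq> X'" using chainsD[OF C] by blast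
        then show "X \<subseteq> Y \<or> Y \<subseteq> X" using XY(1,2) by blast
      qed
      then have "uminus ` C \<in> chains A"
        unfolding chains_def using sub by blast
      moreover have "uminus ` C \<noteq> {}" using False by blast
      ultimately obtain L where L: "L \<in> A" "\<forall>X\<in>uminus ` C. L \<subseteq> X" using ch by blast
      have "\<forall>X\<in>C. X \<subseteq> - L"
      proof
        fix X assume "X \<in> C"
        then have "- X \<in> uminus ` C" by (rule imageI)
        then have "L \<subseteq> - X" using L(2) by (rule bspec[rotated])
        then show "X \<subseteq> - L" by blast
      qed
      moreover have "- L \<in> uminus ` A" using L(1) by (rule imageI)
      ultimately show ?thesis by blast
    qed
  qed
  then obtain Mx where Mx: "Mx \<in> uminus ` A" "\<forall>X\<in>uminus ` A. Mx \<subseteq> X \<longrightarrow> X = Mx" by blast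
  have "\<forall>X\<in>A. X \<subseteq> - Mx \<longrightarrow> X = - Mx"
  proof (intro ballI impI)
    fix X assume X: "X \<in> A" "X \<subseteq> - Mx"
    have "- X \<in> uminus ` A" using X(1) by (rule imageI)
    moreover have "Mx \<subseteq> - X" using X(2) by blast
    ultimately have "- X = Mx" using Mx(2) by blast
    then show "X = - Mx" by auto
  qed
  moreover obtain a where "Mx = - a" "a \<in> A" using Mx(1) by blast
  then have "- Mx \<in> A" by simp
  ultimately show ?thesis by blast
qed

lemma finite_chain_min:
  "finite G \<Longrightarrow> G \<noteq> {} \<Longrightarrow> (\<forall>X\<in>G. \<forall>Y\<in>G. X \<subseteq> Y \<or> Y \<subseteq> X) \<Longrightarrow> \<exists>m\<in>G. \<forall>X\<in>G. m \<subseteq> X"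
proof (induction G rule: finite_ne_induct)
  case (singleton x) then show ?case by blast
next
  case (insert x G)
  have "\<forall>X\<in>G. \<forall>Y\<in>G. X \<subseteq> Y \<or> Y \<subseteq> X" using insert.prems by blast
  then obtain m where m: "m \<in> G" "\<forall>X\<in>G. m \<subseteq> X" using insert.IH by blast
  show ?case
  proof (cases "x \<subseteq> m")
    case True then show ?thesis using m by blast
  next
    case False
    then have "m \<subseteq> x" using insert.prems m(1) by blast
    then show ?thesis using m by blast
  qed
qed

lemma iter_in: "R ` A \<subseteq> A \<Longrightarrow> y \<in> A \<Longrightarrow> (R ^^ n) y \<in> A"
  by (induction n) auto

lemma orbit_sub: "R ` A \<subseteq> A \<Longrightarrow> y \<in> A \<Longrightarrow> orbit R y \<subseteq> A"
  unfolding orbit_def using iter_in[of R A y] by auto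

locale fpctx = Metric_space M d for M and d :: "'a \<Rightarrow> 'a \<Rightarrow> real" +
  fixes F :: "('a \<Rightarrow> 'a) set" and p q bnd :: real and c0 :: 'a
  assumes Fne: "F \<noteq> {}" and ion: "interlaced_orbit_nonexpansive M d F"
    and cpt: "admissible_compact M d"
    and c0: "c0 \<in> M" and bnd: "M \<subseteq> mcball c0 bnd"
    and urns: "URNS M d p q" and p: "p > 0" and q0: "0 < q" and q1: "q < 1"
begin

definition invar where "invar A \<longleftrightarrow> (\<forall>T\<in>F. T ` A \<subseteq> A)"
definition selfgen where
  "selfgen K \<longleftrightarrow> (\<forall>w\<in>M. \<forall>r. (\<forall>S\<in>F. \<forall>y\<in>K. d w (S y) \<le> r) \<longrightarrow> (\<forall>x\<in>K. d w x \<le> r))"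
abbreviation adm where "adm A \<equiv> admissible M d A"
abbreviation BB where "BB A r \<equiv> Bset M d A r"
definition good where "good K \<longleftrightarrow> K \<noteq> {} \<and> adm K \<and> invar K \<and> selfgen K"

lemma maps: "T \<in> F \<Longrightarrow> x \<in> M \<Longrightarrow> T x \<in> M"
  using ion unfolding interlaced_orbit_nonexpansive_def by blast

lemma dbound: assumes "x \<in> M" "y \<in> M" shows "d x y \<le> 2 * bnd"
proof -
  have "d c0 x \<le> bnd" "d c0 y \<le> bnd" using bnd assms by auto
  moreover have "d x y \<le> d x c0 + d c0 y" using triangle assms c0 by blast
  ultimately show ?thesis using commute[of x c0] by linarith
qed

lemma adm_sub: "adm A \<Longrightarrow> A \<subseteq> M" unfolding admissible_def by auto

lemma adm_Inter:
  assumes "\<And>A. A \<in> \<A> \<Longrightarrow> adm A" shows "adm (M \<inter> \<Inter>\<A>)"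
proof -
  define Bs where "Bs = {mcball x r |x r. x \<in> M}"
  let ?B = "{b \<in> Bs. \<exists>A\<in>\<A>. A \<subseteq> b}"
  have eq: "M \<inter> \<Inter>\<A> = M \<inter> \<Inter>?B"
  proof
    show "M \<inter> \<Inter>\<A> \<subseteq> M \<inter> \<Inter>?B" by blast
    show "M \<inter> \<Inter>?B \<subseteq> M \<inter> \<Inter>\<A>"
    proof
      fix z assume z: "z \<in> M \<inter> \<Inter>?B"
      have "z \<in> A" if A: "A \<in> \<A>" for A
      proof -
        obtain \<B> where B: "\<B> \<subseteq> Bs" "A = M \<inter> \<Inter>\<B>"
          using assms[OF A] unfolding admissible_def Bs_def by blast
        have "\<B> \<subseteq> ?B"
        proof
          fix b assume b: "b \<in> \<B>"
          have "b \<in> Bs" using B(1) b by (rule subsetD)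
          moreover have "A \<subseteq> b" using B(2) b by blast
          ultimately show "b \<in> ?B" using A by blast
        qed
        then have "z \<in> \<Inter>\<B>" using z by blast
        then show ?thesis using z B(2) by blast
      qed
      then show "z \<in> M \<inter> \<Inter>\<A>" using z by blast
    qed
  qed
  have sub: "?B \<subseteq> Bs" by blast
  then have sub2: "?B \<subseteq> {mcball x r |x r. x \<in> M}" unfolding Bs_def .
  show ?thesis unfolding admissible_def
    by (intro exI[of _ ?B] conjI sub2 eq)
qed

lemma adm_ball: "x \<in> M \<Longrightarrow> adm (mcball x r)"
  unfolding admissible_def
  by (rule exI[of _ "{mcball x r}"]) (auto simp: mcball_subset_mspace)

lemma adm_M: "adm M"
  unfolding admissible_def by (rule exI[of _ "{}"]) auto

lemma adm_Int: assumes "adm A" "adm B" shows "adm (A \<inter> B)"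
proof -
  have "A \<inter> B = M \<inter> \<Inter>{A, B}" using adm_sub[OF assms(1)] by blast
  then show ?thesis using adm_Inter[of "{A,B}"] assms by auto
qed

lemma adm_BB: assumes "A \<subseteq> M" shows "adm (BB A r)"
proof -
  have "BB A r = M \<inter> \<Inter>((\<lambda>x. mcball x r) ` A)" unfolding Bset_def by blast
  then show ?thesis using adm_Inter[of "(\<lambda>x. mcball x r) ` A"] adm_ball assms by auto
qed

lemma BB_iff: "A \<subseteq> M \<Longrightarrow> y \<in> BB A r \<longleftrightarrow> y \<in> M \<and> (\<forall>a\<in>A. d a y \<le> r)"
  unfolding Bset_def by auto

lemma chain_Inter_ne:
  assumes "\<C> \<noteq> {}" "\<And>A. A \<in> \<C> \<Longrightarrow> adm A" "\<And>A. A \<in> \<C> \<Longrightarrow> A \<noteq> {}"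
    and "\<And>A B. A \<in> \<C> \<Longrightarrow> B \<in> \<C> \<Longrightarrow> A \<subseteq> B \<or> B \<subseteq> A"
  shows "M \<inter> \<Inter>\<C> \<noteq> {}"
proof -
  have fin: "M \<inter> \<Inter>G \<noteq> {}" if fG: "finite G \<and> G \<subseteq> \<C>" for G
  proof (cases "G = {}")
    case True then show ?thesis using c0 by auto
  next
    case False
    have chG: "\<forall>X\<in>G. \<forall>Y\<in>G. X \<subseteq> Y \<or> Y \<subseteq> X"
    proof (intro ballI)
      fix X Y assume "X \<in> G" "Y \<in> G"
      then have "X \<in> \<C>" "Y \<in> \<C>" using fG by auto
      then show "X \<subseteq> Y \<or> Y \<subseteq> X" by (rule assms(4))
    qed
    obtain m where m: "m \<in> G" "\<forall>X\<in>G. m \<subseteq> X"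
      using finite_chain_min[OF conjunct1[OF fG] False chG] by blast
    have mC: "m \<in> \<C>" using m(1) fG by auto
    have "m \<subseteq> M" using adm_sub[OF assms(2)[OF mC]] .
    then have "m \<subseteq> M \<inter> \<Inter>G" using m(2) by auto
    moreover have "m \<noteq> {}" using assms(3)[OF mC] .
    ultimately show ?thesis by (metis subset_empty)
  qed
  have "\<C> \<subseteq> Collect adm" using assms(2) by auto
  then show ?thesis using cpt fin unfolding admissible_compact_def by auto
qed

lemma ion_bound:
  assumes T: "T \<in> F" and S: "S \<in> F" and x: "x \<in> M" and A: "A \<subseteq> M" "invar A" and y: "y \<in> A"
    and r: "\<And>a. a \<in> A \<Longrightarrow> d x a \<le> r"
  shows "d (T x) (S y) \<le> r"
proof -
  have "d (T x) (S y) \<le> (SUP R\<in>F. Dsup d x (orbit R y))"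
    using ion T S x A y unfolding interlaced_orbit_nonexpansive_def by blast
  also have "\<dots> \<le> r"
  proof (rule cSUP_least[OF Fne])
    fix R assume R: "R \<in> F"
    have RA: "R ` A \<subseteq> A" using A(2) R unfolding invar_def by auto
    have sub: "orbit R y \<subseteq> A" using orbit_sub[OF RA y] .
    have "orbit R y \<noteq> {}" unfolding orbit_def by blast
    then show "Dsup d x (orbit R y) \<le> r" unfolding Dsup_def
      using r sub by (meson cSUP_least subsetD)
  qed
  finally show ?thesis .
qed

lemma selfgen_BB_inv:
  assumes sg: "selfgen K" and iK: "invar K" and KM: "K \<subseteq> M" shows "invar (BB K r)"
  unfolding invar_def
proof (intro ballI subsetI, elim imageE)
  fix T z x assume T: "T \<in> F" and z: "z = T x" and x: "x \<in> BB K r"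
  have xM: "x \<in> M" and xr: "\<And>a. a \<in> K \<Longrightarrow> d a x \<le> r" using x KM by (auto simp: BB_iff)
  have xr': "\<And>a. a \<in> K \<Longrightarrow> d x a \<le> r" using xr commute by metis
  have TxM: "T x \<in> M" using maps T xM by blast
  have "\<forall>S\<in>F. \<forall>y\<in>K. d (T x) (S y) \<le> r"
    using ion_bound[OF T _ xM KM iK _ xr'] by blast
  then have "\<forall>a\<in>K. d (T x) a \<le> r" using sg TxM unfolding selfgen_def by blast
  then show "z \<in> BB K r" using TxM z KM commute by (auto simp: BB_iff)
qed

lemma bdd_pairs: "A \<subseteq> M \<Longrightarrow> bdd_above ((\<lambda>xy. d (fst xy) (snd xy)) ` (A \<times> A))"
  by (rule bdd_aboveI[of _ "2*bnd"]) (auto intro!: dbound)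

lemma diam_ge: "A \<subseteq> M \<Longrightarrow> a \<in> A \<Longrightarrow> b \<in> A \<Longrightarrow> d a b \<le> diam_d d A"
  unfolding diam_d_def using cSUP_upper[OF _ bdd_pairs, of "(a,b)" A] by auto

lemma diam_le: "A \<noteq> {} \<Longrightarrow> (\<And>a b. a\<in>A \<Longrightarrow> b\<in>A \<Longrightarrow> d a b \<le> c) \<Longrightarrow> diam_d d A \<le> c"
  unfolding diam_d_def by (rule cSUP_least) auto


lemma min_selfgen:
  assumes X: "adm X" "invar X" "X \<inter> BB X s \<noteq> {}"
  shows "\<exists>D. adm D \<and> invar D \<and> D \<subseteq> X \<and> D \<inter> BB D s \<noteq> {} \<and> selfgen D"
proof -
  define P where "P = {D. adm D \<and> invar D \<and> D \<subseteq> X \<and> D \<inter> BB D s \<noteq> {}}"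
  have XP: "X \<in> P" using X unfolding P_def by auto
  have "\<exists>m\<in>P. \<forall>Y\<in>P. Y \<subseteq> m \<longrightarrow> Y = m"
  proof (rule Zorn_min)
    show "P \<noteq> {}" using XP by auto
  next
    fix C assume C: "C \<in> chains P" "C \<noteq> {}"
    have CP: "C \<subseteq> P" using chainsD2[OF C(1)] .
    have CA: "adm A" "invar A" "A \<subseteq> X" "A \<inter> BB A s \<noteq> {}" if "A \<in> C" for A
      using CP that unfolding P_def by auto
    define D where "D = M \<inter> \<Inter>C"
    have admD: "adm D" unfolding D_def using CA(1) by (rule adm_Inter)
    have DM: "D \<subseteq> M" unfolding D_def by auto
    have DA: "D \<subseteq> A" if "A \<in> C" for A unfolding D_def using that by auto
    have invD: "invar D"
      unfolding invar_def
    proof (intro ballI subsetI)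
      fix T z assume T: "T \<in> F" and z: "z \<in> T ` D"
      then obtain x where x: "z = T x" "x \<in> D" by auto
      have "T x \<in> M" using maps[OF T] x DM by auto
      moreover have "T x \<in> A" if A: "A \<in> C" for A
      proof -
        have "x \<in> A" using DA[OF A] x(2) by auto
        then show ?thesis using CA(2)[OF A] T unfolding invar_def by auto
      qed
      ultimately show "z \<in> D" unfolding D_def using x(1) by auto
    qed
    obtain A0 where A0: "A0 \<in> C" using C(2) by auto
    have DX: "D \<subseteq> X" using DA[OF A0] CA(3)[OF A0] by auto
    have BBD: "BB A s \<subseteq> BB D s" if "A \<in> C" for A
      using DA[OF that] unfolding Bset_def by auto
    have "M \<inter> \<Inter>((\<lambda>A. A \<inter> BB D s) ` C) \<noteq> {}"
    proof (rule chain_Inter_ne)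
      show "(\<lambda>A. A \<inter> BB D s) ` C \<noteq> {}" using C(2) by auto
    next
      fix A' assume "A' \<in> (\<lambda>A. A \<inter> BB D s) ` C"
      then obtain A where A: "A \<in> C" "A' = A \<inter> BB D s" by auto
      show "adm A'" using A(2) adm_Int[OF CA(1)[OF A(1)] adm_BB[OF DM]] by simp
    next
      fix A' assume "A' \<in> (\<lambda>A. A \<inter> BB D s) ` C"
      then obtain A where A: "A \<in> C" "A' = A \<inter> BB D s" by auto
      have "A \<inter> BB A s \<subseteq> A'" using A(2) BBD[OF A(1)] by auto
      then show "A' \<noteq> {}" using CA(4)[OF A(1)] by auto
    next
      fix A' B' assume "A' \<in> (\<lambda>A. A \<inter> BB D s) ` C" "B' \<in> (\<lambda>A. A \<inter> BB D s) ` C"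
      then obtain A B where A: "A \<in> C" "A' = A \<inter> BB D s" and B: "B \<in> C" "B' = B \<inter> BB D s" by auto
      have "A \<subseteq> B \<or> B \<subseteq> A" using chainsD[OF C(1) A(1) B(1)] .
      then show "A' \<subseteq> B' \<or> B' \<subseteq> A'" using A(2) B(2) by auto
    qed
    moreover have "M \<inter> \<Inter>((\<lambda>A. A \<inter> BB D s) ` C) \<subseteq> D \<inter> BB D s"
    proof
      fix y assume y: "y \<in> M \<inter> \<Inter>((\<lambda>A. A \<inter> BB D s) ` C)"
      have yA: "y \<in> A \<inter> BB D s" if "A \<in> C" for A
      proof -
        have "(\<lambda>A. A \<inter> BB D s) A \<in> (\<lambda>A. A \<inter> BB D s) ` C" using that by (rule imageI)
        from InterD[OF IntD2[OF y] this] show ?thesis by simp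
      qed
      have "y \<in> D" unfolding D_def using yA y by auto
      moreover have "y \<in> BB D s" using yA[OF A0] by auto
      ultimately show "y \<in> D \<inter> BB D s" by auto
    qed
    ultimately have "D \<inter> BB D s \<noteq> {}" by auto
    then have "D \<in> P" using admD invD DX unfolding P_def by auto
    moreover have "\<forall>Y\<in>C. D \<subseteq> Y" using DA by auto
    ultimately show "\<exists>L\<in>P. \<forall>Y\<in>C. L \<subseteq> Y" by auto
  qed
  then obtain D where DP: "D \<in> P" and minD: "\<And>Y. Y \<in> P \<Longrightarrow> Y \<subseteq> D \<Longrightarrow> Y = D" by auto
  have admD: "adm D" and invD: "invar D" and DX: "D \<subseteq> X" and Dne: "D \<inter> BB D s \<noteq> {}"
    using DP unfolding P_def by auto
  have DM: "D \<subseteq> M" using adm_sub[OF admD] .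
  define H where "H = {mcball w r | w r. w \<in> M \<and> (\<forall>S\<in>F. \<forall>y\<in>D. d w (S y) \<le> r)}"
  define D' where "D' = M \<inter> \<Inter>(insert D H)"
  have D'D: "D' \<subseteq> D" unfolding D'_def by auto
  have admD': "adm D'" unfolding D'_def
  proof (rule adm_Inter)
    fix A assume "A \<in> insert D H"
    then show "adm A"
    proof
      assume "A = D" then show ?thesis using admD by simp
    next
      assume "A \<in> H"
      then obtain w r where "A = mcball w r" "w \<in> M" unfolding H_def by auto
      then show ?thesis using adm_ball by simp
    qed
  qed
  have imgD': "T x \<in> D'" if T: "T \<in> F" and x: "x \<in> D" for T x
  proof -
    have TxD: "T x \<in> D" using invD T x unfolding invar_def by auto
    have TxM: "T x \<in> M" using DM TxD by auto
    have "T x \<in> b" if b: "b \<in> H" for b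
    proof -
      obtain w r where wr: "b = mcball w r" "w \<in> M" "\<forall>S\<in>F. \<forall>y\<in>D. d w (S y) \<le> r"
        using b unfolding H_def by auto
      have "d w (T x) \<le> r" using wr(3) T x by auto
      then show ?thesis using wr(1,2) TxM by auto
    qed
    then show ?thesis unfolding D'_def using TxD TxM by auto
  qed
  have invD': "invar D'" unfolding invar_def
  proof (intro ballI subsetI)
    fix T z assume T: "T \<in> F" and z: "z \<in> T ` D'"
    then obtain x where "z = T x" "x \<in> D'" by auto
    then show "z \<in> D'" using imgD'[OF T] D'D by auto
  qed
  have "D' \<inter> BB D' s \<noteq> {}"
  proof -
    obtain x where x: "x \<in> D" "x \<in> BB D s" using Dne by auto
    obtain T0 where T0: "T0 \<in> F" using Fne by auto
    have xM: "x \<in> M" using x DM by auto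
    have xr: "d x a \<le> s" if "a \<in> D" for a
      using x(2) DM that commute by (auto simp: BB_iff)
    have "\<forall>S\<in>F. \<forall>y\<in>D. d (T0 x) (S y) \<le> s"
      using ion_bound[OF T0 _ xM DM invD _ xr] by auto
    moreover have "T0 x \<in> M" using maps[OF T0 xM] .
    ultimately have ball: "mcball (T0 x) s \<in> H" unfolding H_def by auto
    have "d a (T0 x) \<le> s" if a: "a \<in> D'" for a
    proof -
      have "a \<in> mcball (T0 x) s" using ball a unfolding D'_def by auto
      then show ?thesis using commute by auto
    qed
    then have "T0 x \<in> BB D' s" using D'D DM maps[OF T0 xM] by (auto simp: BB_iff)
    then show ?thesis using imgD'[OF T0 x(1)] by auto
  qed
  then have "D' \<in> P" using admD' invD' D'D DX unfolding P_def by auto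
  then have D'eq: "D' = D" using minD D'D by auto
  have "selfgen D" unfolding selfgen_def
  proof (intro ballI allI impI)
    fix w r x assume w: "w \<in> M" and h: "\<forall>S\<in>F. \<forall>y\<in>D. d w (S y) \<le> r" and x: "x \<in> D"
    have "mcball w r \<in> H" unfolding H_def using w h by auto
    have "x \<in> D'" using x D'eq by simp
    then have "x \<in> \<Inter>(insert D H)" unfolding D'_def by (rule IntD2)
    then have "x \<in> mcball w r" using \<open>mcball w r \<in> H\<close> by (rule InterD[OF _ insertI2])
    then show "d w x \<le> r" by auto
  qed
  then show ?thesis using admD invD DX Dne by auto
qed

lemma step:
  assumes g: "good K" and pos: "diam_d d K > 0"
  shows "\<exists>K'. good K' \<and> diam_d d K' \<le> q * diam_d d K \<and> K' \<subseteq> BB K (p * diam_d d K)"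
proof -
  define \<delta> where "\<delta> = diam_d d K"
  have gK: "K \<noteq> {}" "adm K" "invar K" "selfgen K" using g unfolding good_def by auto
  have KM: "K \<subseteq> M" using adm_sub[OF gK(2)] .
  define C where "C = BB K (p*\<delta>)"
  have admC: "adm C" unfolding C_def using adm_BB[OF KM] .
  have invC: "invar C" unfolding C_def using selfgen_BB_inv[OF gK(4) gK(3) KM] .
  have Cne: "C \<inter> BB C (q*\<delta>) \<noteq> {}"
    using urns gK(2) pos unfolding URNS_def C_def \<delta>_def by auto
  obtain D where D: "adm D" "invar D" "D \<subseteq> C" "D \<inter> BB D (q*\<delta>) \<noteq> {}" "selfgen D"
    using min_selfgen[OF admC invC Cne] by auto
  have DM: "D \<subseteq> M" using adm_sub[OF D(1)] .
  define E where "E = D \<inter> BB D (q*\<delta>)"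
  have admE: "adm E" unfolding E_def using adm_Int[OF D(1) adm_BB[OF DM]] .
  have invBD: "invar (BB D (q*\<delta>))" using selfgen_BB_inv[OF D(5) D(2) DM] .
  have invE: "invar E" unfolding E_def invar_def
  proof (intro ballI subsetI)
    fix T z assume T: "T \<in> F" and z: "z \<in> T ` (D \<inter> BB D (q*\<delta>))"
    then obtain x where x: "z = T x" "x \<in> D" "x \<in> BB D (q*\<delta>)" by auto
    have "T x \<in> D" using D(2) T x(2) unfolding invar_def by auto
    moreover have "T x \<in> BB D (q*\<delta>)" using invBD T x(3) unfolding invar_def by auto
    ultimately show "z \<in> D \<inter> BB D (q*\<delta>)" using x(1) by auto
  qed
  have EM: "E \<subseteq> M" unfolding E_def using DM by auto
  have Ed: "d a b \<le> q*\<delta>" if "a \<in> E" "b \<in> E" for a b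
  proof -
    have "a \<in> D" using that(1) unfolding E_def by auto
    moreover have "b \<in> BB D (q*\<delta>)" using that(2) unfolding E_def by auto
    ultimately show ?thesis using DM by (auto simp: BB_iff)
  qed
  have "E \<subseteq> BB E (q*\<delta>)"
  proof
    fix x assume x: "x \<in> E"
    then show "x \<in> BB E (q*\<delta>)" using Ed[OF _ x] EM x by (auto simp: BB_iff)
  qed
  moreover have "E \<noteq> {}" using D(4) unfolding E_def .
  ultimately have Ene: "E \<inter> BB E (q*\<delta>) \<noteq> {}" by auto
  obtain K' where K': "adm K'" "invar K'" "K' \<subseteq> E" "K' \<inter> BB K' (q*\<delta>) \<noteq> {}" "selfgen K'"
    using min_selfgen[OF admE invE Ene] by auto
  have K'ne: "K' \<noteq> {}" using K'(4) by auto
  have "good K'" unfolding good_def using K' K'ne by auto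
  moreover have "diam_d d K' \<le> q*\<delta>"
  proof (rule diam_le[OF K'ne])
    fix a b assume "a \<in> K'" "b \<in> K'"
    then show "d a b \<le> q*\<delta>" using Ed K'(3) by auto
  qed
  moreover have "K' \<subseteq> C" using K'(3) D(3) unfolding E_def by auto
  ultimately show ?thesis unfolding C_def \<delta>_def by auto
qed

lemma good_diam:
  assumes g: "good K" and nf: "\<not> (\<exists>x\<in>M. \<forall>T\<in>F. T x = x)"
  shows "diam_d d K > 0"
proof -
  have gK: "K \<noteq> {}" "adm K" "invar K" using g unfolding good_def by auto
  have KM: "K \<subseteq> M" using adm_sub[OF gK(2)] .
  obtain x where x: "x \<in> K" using gK(1) by auto
  have xM: "x \<in> M" using x KM by auto
  obtain T where T: "T \<in> F" "T x \<noteq> x" using nf xM by auto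
  have TxK: "T x \<in> K" using gK(3) T(1) x unfolding invar_def by auto
  have TxM: "T x \<in> M" using TxK KM by auto
  have "d x (T x) \<le> diam_d d K" using diam_ge[OF KM x TxK] .
  moreover have "d x (T x) \<noteq> 0" using zero[OF xM TxM] T(2) by auto
  moreover have "d x (T x) \<ge> 0" by simp
  ultimately show ?thesis by linarith
qed

theorem fixed: "\<exists>x\<in>M. \<forall>T\<in>F. T x = x"
proof (rule ccontr)
  assume nf: "\<not> (\<exists>x\<in>M. \<forall>T\<in>F. T x = x)"
  have invM: "invar M" unfolding invar_def using maps by auto
  have "c0 \<in> BB M (2*bnd)" using c0 dbound by (auto simp: BB_iff)
  then have M0: "M \<inter> BB M (2*bnd) \<noteq> {}" using c0 by auto
  obtain K0 where K0: "adm K0" "invar K0" "K0 \<subseteq> M" "K0 \<inter> BB K0 (2*bnd) \<noteq> {}" "selfgen K0"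
    using min_selfgen[OF adm_M invM M0] by auto
  have g0: "good K0" unfolding good_def using K0 by auto
  have "\<forall>K. \<exists>K'. good K \<longrightarrow> good K' \<and> diam_d d K' \<le> q * diam_d d K \<and> K' \<subseteq> BB K (p * diam_d d K)"
    using step good_diam[OF _ nf] by blast
  then obtain nxt where nxt: "\<And>K. good K \<Longrightarrow> good (nxt K) \<and> diam_d d (nxt K) \<le> q * diam_d d K \<and> nxt K \<subseteq> BB K (p * diam_d d K)"
    by metis
  define Ks where "Ks n = (nxt ^^ n) K0" for n
  have Ksuc: "Ks (Suc n) = nxt (Ks n)" for n by (simp add: Ks_def)
  have gK: "good (Ks n)" for n
  proof (induction n)
    case 0 then show ?case using g0 by (simp add: Ks_def)
  next
    case (Suc n) then show ?case using nxt Ksuc by metis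
  qed
  have KM: "Ks n \<subseteq> M" for n using gK[of n] adm_sub unfolding good_def by auto
  have Kne: "Ks n \<noteq> {}" for n using gK[of n] unfolding good_def by auto
  define \<Delta> where "\<Delta> = diam_d d K0"
  have \<Delta>pos: "\<Delta> > 0" using good_diam[OF g0 nf] unfolding \<Delta>_def .
  have dK: "diam_d d (Ks n) \<le> q^n * \<Delta>" for n
  proof (induction n)
    case 0 then show ?case by (simp add: Ks_def \<Delta>_def)
  next
    case (Suc n)
    have "diam_d d (Ks (Suc n)) \<le> q * diam_d d (Ks n)" using nxt[OF gK[of n]] Ksuc by simp
    also have "\<dots> \<le> q * (q^n*\<Delta>)" using Suc q0 by (intro mult_left_mono) auto
    finally show ?case by simp
  qed
  have link: "d a b \<le> p * q^n * \<Delta>" if "a \<in> Ks n" "b \<in> Ks (Suc n)" for a b n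
  proof -
    have "b \<in> BB (Ks n) (p * diam_d d (Ks n))" using nxt[OF gK[of n]] Ksuc that(2) by auto
    then have "d a b \<le> p * diam_d d (Ks n)" using that(1) KM by (auto simp: BB_iff)
    also have "\<dots> \<le> p * (q^n*\<Delta>)" using dK p by (intro mult_left_mono) auto
    finally show ?thesis by simp
  qed
  define \<rho> where "\<rho> n = p * \<Delta> * q^n / (1-q)" for n
  define W where "W n = BB (Ks n) (\<rho> n)" for n
  have \<rho>rec: "\<rho> n = p*q^n*\<Delta> + \<rho> (Suc n)" for n
    unfolding \<rho>_def using q1 by (simp add: field_simps)
  have \<rho>nn: "\<rho> n \<ge> 0" for n using p q0 q1 \<Delta>pos unfolding \<rho>_def by simp
  have Wsub: "W (Suc n) \<subseteq> W n" for n
  proof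
    fix x assume x: "x \<in> W (Suc n)"
    obtain b where b: "b \<in> Ks (Suc n)" using Kne by blast
    have xM: "x \<in> M" and xb: "d b x \<le> \<rho> (Suc n)" using x b KM unfolding W_def by (auto simp: BB_iff)
    have "d a x \<le> \<rho> n" if a: "a \<in> Ks n" for a
    proof -
      have "d a x \<le> d a b + d b x" using triangle a b KM xM by blast
      also have "\<dots> \<le> p*q^n*\<Delta> + \<rho> (Suc n)" using link[OF a b] xb by linarith
      finally show ?thesis using \<rho>rec[of n] by linarith
    qed
    then show "x \<in> W n" using xM KM unfolding W_def by (auto simp: BB_iff)
  qed
  have Wmono: "W m \<subseteq> W n" if "n \<le> m" for m n
    using lift_Suc_antimono_le[of W, OF Wsub that] .
  have Wne: "W n \<noteq> {}" for n
  proof -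
    obtain b where b: "b \<in> Ks (Suc n)" using Kne by blast
    have "d a b \<le> \<rho> n" if "a \<in> Ks n" for a
      using link[OF that b] \<rho>rec[of n] \<rho>nn[of "Suc n"] by linarith
    then have "b \<in> W n" using b KM unfolding W_def by (auto simp: BB_iff)
    then show ?thesis by auto
  qed
  have admW: "adm (W n)" for n unfolding W_def using adm_BB[OF KM] .
  have "M \<inter> \<Inter>(range W) \<noteq> {}"
  proof (rule chain_Inter_ne)
    show "range W \<noteq> {}" by auto
  next
    fix A assume "A \<in> range W" then show "adm A" using admW by auto
  next
    fix A assume "A \<in> range W" then show "A \<noteq> {}" using Wne by auto
  next
    fix A B assume "A \<in> range W" "B \<in> range W"
    then obtain i j where "A = W i" "B = W j" by auto
    then show "A \<subseteq> B \<or> B \<subseteq> A" using Wmono nat_le_linear[of i j] by auto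
  qed
  then obtain x where xM: "x \<in> M" and xW: "\<And>n. x \<in> W n" by auto
  obtain T where T: "T \<in> F" "T x \<noteq> x" using nf xM by auto
  have TxM: "T x \<in> M" using maps[OF T(1) xM] .
  have invW: "invar (W n)" for n
    unfolding W_def using selfgen_BB_inv gK[of n] KM[of n] unfolding good_def by auto
  have Tx: "T x \<in> W n" for n using invW[of n] xW[of n] T(1) unfolding invar_def by auto
  have dle: "d x (T x) \<le> 2 * \<rho> n" for n
  proof -
    obtain a where a: "a \<in> Ks n" using Kne by blast
    have aM: "a \<in> M" using a KM by auto
    have "d a x \<le> \<rho> n" "d a (T x) \<le> \<rho> n" using xW[of n] Tx[of n] a KM unfolding W_def by (auto simp: BB_iff)
    moreover have "d x (T x) \<le> d x a + d a (T x)" using triangle[OF xM aM TxM] .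
    moreover have "d x a = d a x" using commute .
    ultimately show ?thesis by linarith
  qed
  have dpos: "d x (T x) > 0"
  proof -
    have "d x (T x) \<noteq> 0" using zero[OF xM TxM] T(2) by auto
    then show ?thesis using nonneg[of x "T x"] by linarith
  qed
  define c where "c = 2 * p * \<Delta> / (1 - q)"
  have cpos: "c > 0" unfolding c_def using p \<Delta>pos q1 by simp
  obtain n where n: "q ^ n < d x (T x) / c" using real_arch_pow_inv[of "d x (T x) / c" q] dpos cpos q1 by auto
  have "2 * \<rho> n = c * q ^ n" unfolding c_def \<rho>_def by simp
  then have "d x (T x) \<le> c * q ^ n" using dle[of n] by simp
  also have "\<dots> < c * (d x (T x) / c)" using mult_strict_left_mono[OF n cpos] .
  also have "\<dots> = d x (T x)" using cpos by simp
  finally show False by simp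
qed

end

theorem theorem4p5:
  fixes M :: "'a set" and d :: "'a \<Rightarrow> 'a \<Rightarrow> real"
    and p q :: real and F :: "('a \<Rightarrow> 'a) set"
  assumes "Metric_space M d"
    and "M \<noteq> {}"
    and "Metric_space.mbounded M d M"
    and "p > 0" and "0 < q" and "q < 1"
    and "URNS M d p q"
    and "admissible_compact M d"
    and "interlaced_orbit_nonexpansive M d F"
  shows "\<exists>x\<in>M. \<forall>T\<in>F. T x = x"
proof (cases "F = {}")
  case True then show ?thesis using assms(2) by auto
next
  case False
  interpret Metric_space M d by fact
  obtain c0 bnd where cb: "M \<subseteq> mcball c0 bnd" using assms(3) unfolding mbounded_def by auto
  have c0: "c0 \<in> M" using cb assms(2) by auto
  interpret fpctx M d F p q bnd c0
    by unfold_locales (use False assms cb c0 in auto)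
  show ?thesis by (rule fixed)
qed

end
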